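(* Let $n\ge 2$, $A\in\mathbb{R}^{n\times n}$ and $C\in\mathbb{R}^{1\times n}$, with $(A,C)$ an observable pair and all eigenvalues of $A$ nonzero. Suppose the eigenvalues $\lambda_1,\ldots,\lambda_n$ of $A$ are pairwise distinct and satisfy $\lambda_1^n=\lambda_2^n=\cdots=\lambda_n^n$. Then, for a finite set $S$ of nonnegative integers, the matrix with rows $CA^{s}$, $s\in S$, has rank $n$ if and only if $S$ contains a subset of the form $$\{t,\ t+r_1n+1,\ t+r_2n+2,\ \ldots,\ t+r_{n-1}n+n-1\}$$ for some $t,r_1,\ldots,r_{n-1}\in\{0,1,2,\ldots\}$.
   Context: Setting: discrete-time single-output system $x(t+1)=Ax(t)+Bu(t)$, $y(t)=Cx(t)+Du(t)$ whose output is measured at the time instances in $S$ (a sampling scheme); the matrix with rows $CA^{s}$, $s\in S$, is the sample-based observability matrix, and rank $n$ means sample-based observability. $(A,C)$ observable means the matrix with rows $C,CA,\ldots,CA^{n-1}$ has rank $n$. *)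

theory Defs
  imports "HOL-Analysis.Analysis"
begin

text \<open>Matrix power (the ring structure on vec is pointwise, so we define it via matrix product).\<close>
fun matpow :: "'a::semiring_1 ^'n::finite^'n \<Rightarrow> nat \<Rightarrow> 'a^'n^'n" where
  "matpow A 0 = mat 1"
| "matpow A (Suc k) = A ** matpow A k"

definition cmat :: "real^'n::finite^'n \<Rightarrow> complex^'n^'n" where
  "cmat A = (\<chi> i j. complex_of_real (A $ i $ j))"

definition eigenvalues :: "real^'n::finite^'n \<Rightarrow> complex set" where
  "eigenvalues A = {c. \<exists>v::complex^'n. v \<noteq> 0 \<and> cmat A *v v = c *s v}"

definition sample_obs_rank :: "real^'n::finite^'n \<Rightarrow> real^'n \<Rightarrow> nat set \<Rightarrow> nat" where
  "sample_obs_rank A C S = dim (span ((\<lambda>s. C v* matpow A s) ` S))"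

definition observable :: "real^'n::finite^'n \<Rightarrow> real^'n \<Rightarrow> bool" where
  "observable A C \<longleftrightarrow> sample_obs_rank A C {0..<CARD('n)} = CARD('n)"

end

theory Submission
  imports Defs
begin


lemma eig_indep:
  fixes M :: "'a::field^'n^'n" and ev :: "'a^'n \<Rightarrow> 'a"
  assumes "finite V" "\<And>v. v \<in> V \<Longrightarrow> v \<noteq> 0" "\<And>v. v \<in> V \<Longrightarrow> M *v v = ev v *s v"
    "inj_on ev V"
  shows "vec.independent V"
  using assms
proof (induction V rule: finite_induct)
  case empty
  then show ?case by (simp add: vec.independent_empty)
next
  case (insert w V)
  have IV: "vec.independent V" using insert by (auto simp: inj_on_insert)
  have "w \<notin> vec.span V"
  proof
    assume "w \<in> vec.span V"
    then obtain u where u: "w = (\<Sum>v\<in>V. u v *s v)"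
      using vec.span_finite[OF insert(1)] by auto
    have "M *v w = (\<Sum>v\<in>V. u v *s (M *v v))"
      unfolding u by (simp add: vec.linear_sum vec.scale)
    also have "\<dots> = (\<Sum>v\<in>V. (u v * ev v) *s v)"
      using insert by (intro sum.cong) auto
    finally have 1: "M *v w = (\<Sum>v\<in>V. (u v * ev v) *s v)" .
    define e where "e = ev w"
    have "M *v w = e *s w" using insert(5)[of w] e_def by simp
    also have "\<dots> = (\<Sum>v\<in>V. (u v * e) *s v)"
      unfolding u by (simp add: vec.scale_sum_right mult.commute)
    finally have 2: "M *v w = (\<Sum>v\<in>V. (u v * ev w) *s v)" by (simp add: e_def)
    have eq: "(\<Sum>v\<in>V. (\<lambda>v. u v * (ev v - ev w)) v *s v) = 0"
      using 1 2 by (simp add: algebra_simps vec.scale_left_diff_distrib sum_subtractf)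
    have IE: "\<forall>c. (\<Sum>v\<in>V. c v *s v) = 0 \<longrightarrow> (\<forall>v\<in>V. c v = 0)"
      using IV unfolding vec.independent_explicit by blast
    have z: "\<forall>v\<in>V. u v * (ev v - ev w) = 0"
      using IE[rule_format, OF eq] by simp
    have "\<forall>v\<in>V. u v = 0"
    proof
      fix v assume "v \<in> V"
      then have "ev v \<noteq> ev w" using insert(2,6) by (auto simp: inj_on_def)
      then show "u v = 0" using z \<open>v \<in> V\<close> by auto
    qed
    then have "w = 0" unfolding u by simp
    then show False using insert(4) by auto
  qed
  then show ?case using IV vec.independent_insertI by blast
qed



lemma cmat_mult: "cmat (X ** Y) = cmat X ** cmat Y"
  by (simp add: cmat_def matrix_matrix_mult_def vec_eq_iff)

lemma cmat_one: "cmat (mat 1) = mat 1"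
  by (simp add: cmat_def mat_def vec_eq_iff)

lemma cmat_pow: "cmat (matpow A k) = matpow (cmat A) k"
  by (induction k) (simp_all add: cmat_one cmat_mult)

lemma mv_scale: "(M::'a::comm_ring_1^'n^'m) *v (a *s v) = a *s (M *v v)"
  by (simp add: matrix_vector_mult_def vec_eq_iff sum_distrib_left algebra_simps)

lemma matpow_eig: "(M::'a::comm_ring_1^'n^'n) *v v = l *s v \<Longrightarrow> matpow M k *v v = l^k *s v"
proof (induction k)
  case 0 then show ?case by simp
next
  case (Suc k)
  have "matpow M (Suc k) *v v = M *v (matpow M k *v v)"
    by (simp add: matrix_vector_mul_assoc)
  also have "\<dots> = l^k *s (M *v v)" using Suc by (simp add: mv_scale)
  also have "\<dots> = l^(Suc k) *s v" using Suc by (simp add: mult.commute)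
  finally show ?case .
qed

lemma pow_scalar:
  fixes A :: "real^'n::finite^'n"
  assumes "0 \<notin> eigenvalues A"
    and "card (eigenvalues A) = CARD('n)"
    and "\<forall>l\<in>eigenvalues A. \<forall>m\<in>eigenvalues A. l ^ CARD('n) = m ^ CARD('n)"
  shows "\<exists>cr. cr \<noteq> 0 \<and> matpow A CARD('n) = cr *\<^sub>R mat 1"
proof -
  define E where "E = eigenvalues A"
  define n where "n = CARD('n)"
  define M where "M = cmat A"
  have "card E > 0" using assms(2) unfolding E_def by simp
  then have fin: "finite E" and ne: "E \<noteq> {}" by (auto simp: card_gt_0_iff)
  obtain l0 where l0: "l0 \<in> E" using ne by auto
  define c where "c = l0 ^ n"
  define vf where "vf l = (SOME v. v \<noteq> 0 \<and> M *v v = l *s v)" for l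
  have vf: "vf l \<noteq> 0 \<and> M *v vf l = l *s vf l" if "l \<in> E" for l
    using that unfolding vf_def E_def eigenvalues_def M_def by (metis (mono_tags, lifting) mem_Collect_eq someI_ex)
  have injvf: "inj_on vf E"
  proof (rule inj_onI)
    fix l m assume "l \<in> E" "m \<in> E" "vf l = vf m"
    then have "l *s vf l = m *s vf l" using vf by metis
    then show "l = m" using vf \<open>l \<in> E\<close> by simp
  qed
  define V where "V = vf ` E"
  define ev where "ev = inv_into E vf"
  have evV: "ev (vf l) = l" if "l \<in> E" for l
    using injvf that unfolding ev_def by simp
  have indep: "vec.independent V"
  proof (rule eig_indep[where V=V and M=M and ev=ev])
    show "finite V" using fin V_def by simp
    show "v \<noteq> 0" if "v \<in> V" for v using that vf V_def by auto
    show "M *v v = ev v *s v" if "v \<in> V" for v using that vf evV V_def by auto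
    show "inj_on ev V" unfolding V_def ev_def by (rule inj_on_inv_into) simp
  qed
  have cardV: "card V = n" using card_image[OF injvf] assms(2) V_def E_def n_def by simp
  have spanV: "vec.span V = UNIV"
    using vec.card_eq_dim[of V UNIV] indep cardV vec_dim_card[where 'a=complex and 'n='n] n_def fin V_def
    by auto
  have eigc: "matpow M n *v v = c *s v" if vV: "v \<in> V" for v
  proof -
    obtain l where l: "l \<in> E" "v = vf l" using vV unfolding V_def by blast
    have "matpow M n *v v = l^n *s v" using matpow_eig vf l by blast
    moreover have "l^n = c" using assms(3) l l0 unfolding c_def E_def n_def by blast
    ultimately show ?thesis by simp
  qed
  have all: "matpow M n *v x = c *s x" for x
  proof -
    have "x \<in> vec.span V" using spanV by simp
    then show ?thesis
    proof (induction rule: vec.span_induct_alt)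
      case base then show ?case by simp
    next
      case (step a x y)
      then show ?case using eigc[of x]
        by (simp add: matrix_vector_right_distrib mv_scale vec.scale_right_distrib mult.commute)
    qed
  qed
  define T :: "complex^'n^'n" where "T = (\<chi> i j. if i = j then c else 0)"
  have "T *v x = c *s x" for x
  proof -
    have "(\<Sum>j\<in>UNIV. (if i = j then c else 0) * x $ j) = c * x $ i" for i
    proof -
      have "(\<Sum>j\<in>UNIV. (if i = j then c else 0) * x $ j) = (\<Sum>j\<in>UNIV. if i = j then c * x $ i else 0)"
        by (rule sum.cong) auto
      then show ?thesis by simp
    qed
    then show ?thesis by (simp add: T_def matrix_vector_mult_def vec_eq_iff)
  qed
  then have "matpow M n = T" using all by (simp add: matrix_eq)
  then have ent: "complex_of_real (matpow A n $ i $ j) = (if i = j then c else 0)" for i j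
    unfolding M_def cmat_pow[symmetric] by (simp add: cmat_def T_def vec_eq_iff)
  define cr where "cr = Re c"
  have "c \<noteq> 0" using l0 assms(1) E_def c_def by auto
  moreover have "c = of_real cr" using ent[of undefined undefined] cr_def by (metis Re_complex_of_real)
  ultimately have "cr \<noteq> 0" by auto
  moreover have "matpow A n = cr *\<^sub>R mat 1"
  proof -
    have "matpow A n $ i $ j = (cr *\<^sub>R mat 1 :: real^'n^'n) $ i $ j" for i j
      using ent[of i j] \<open>c = of_real cr\<close> by (auto simp: mat_def)
    then show ?thesis by (simp add: vec_eq_iff)
  qed
  ultimately show ?thesis unfolding n_def by blast
qed



lemma matpow_add: "matpow A (a+b) = matpow A a ** matpow A b"
  by (induction a) (simp_all add: matrix_mul_assoc)

lemma scaleR_mat_mult: "((k::real) *\<^sub>R (mat 1 :: real^'n^'n)) ** X = k *\<^sub>R X"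
  by (simp add: matrix_matrix_mult_def vec_eq_iff mat_def if_distrib if_distribR sum.delta cong: if_cong)

lemma matpow_mult: "matpow A n = cr *\<^sub>R mat 1 \<Longrightarrow> matpow (A::real^'n^'n) (q*n) = cr^q *\<^sub>R mat 1"
proof (induction q)
  case 0 then show ?case by simp
next
  case (Suc q)
  have "matpow A (Suc q * n) = matpow A n ** matpow A (q*n)"
    by (metis add.commute matpow_add mult_Suc)
  also have "\<dots> = cr^(Suc q) *\<^sub>R mat 1" using Suc by (simp add: scaleR_mat_mult)
  finally show ?case .
qed

lemma matpow_mod: "matpow A n = cr *\<^sub>R mat 1 \<Longrightarrow> matpow (A::real^'n^'n) s = cr^(s div n) *\<^sub>R matpow A (s mod n)"
proof -
  assume h: "matpow A n = cr *\<^sub>R mat 1"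
  have "matpow A s = matpow A ((s div n) * n) ** matpow A (s mod n)"
    by (metis div_mult_mod_eq matpow_add)
  then show ?thesis using matpow_mult[OF h] by (simp add: scaleR_mat_mult)
qed

lemma rank_card:
  fixes A :: "real^'n::finite^'n" and C :: "real^'n"
  assumes obs: "observable A C" and pw: "matpow A CARD('n) = cr *\<^sub>R mat 1" and cr: "cr \<noteq> 0"
    and fS: "finite S"
  shows "sample_obs_rank A C S = card ((\<lambda>s. s mod CARD('n)) ` S)"
proof -
  define n where "n = CARD('n)"
  define g where "g r = C v* matpow A r" for r
  define R where "R = (\<lambda>s. s mod n) ` S"
  have gs: "g s = cr^(s div n) *\<^sub>R g (s mod n)" for s
    unfolding g_def using matpow_mod[OF pw[folded n_def], of s] by (simp add: vector_scaleR_matrix_ac)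
  have sp: "span (g ` S) = span (g ` R)"
    unfolding span_eq
  proof
    show "g ` S \<subseteq> span (g ` R)"
    proof
      fix x assume "x \<in> g ` S"
      then obtain s where s: "s \<in> S" "x = g s" by auto
      have "g (s mod n) \<in> span (g ` R)" using s R_def by (auto intro: span_base)
      then show "x \<in> span (g ` R)" using s gs by (metis span_mul)
    qed
    show "g ` R \<subseteq> span (g ` S)"
    proof
      fix x assume "x \<in> g ` R"
      then obtain s where s: "s \<in> S" "x = g (s mod n)" using R_def by auto
      have "g s \<in> span (g ` S)" using s by (auto intro: span_base)
      then have "(1 / cr^(s div n)) *\<^sub>R g s \<in> span (g ` S)" by (rule span_mul)
      moreover have "(1 / cr^(s div n)) *\<^sub>R g s = g (s mod n)" using gs[of s] cr by simp
      ultimately show "x \<in> span (g ` S)" using s by simp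
    qed
  qed
  define B where "B = g ` {0..<n}"
  have dimB: "dim (span B) = n" using obs unfolding observable_def sample_obs_rank_def B_def g_def n_def .
  have cB: "card B \<le> n" unfolding B_def by (metis card_atLeastLessThan card_image_le finite_atLeastLessThan diff_zero)
  have "dim (span B) \<le> card B" using dim_le_card[of "span B" B] B_def by (simp add: span_span)
  then have cB2: "card B = n" using cB dimB by simp
  then have injg: "inj_on g {0..<n}" unfolding B_def by (simp add: eq_card_imp_inj_on)
  have indB: "independent B"
    using card_eq_dim[of B "span B"] cB2 dimB B_def by (simp add: span_superset)
  have Rsub: "R \<subseteq> {0..<n}" unfolding R_def n_def by auto
  have indR: "independent (g ` R)" using independent_mono[OF indB] Rsub unfolding B_def by (meson image_mono)
  have "sample_obs_rank A C S = dim (span (g ` R))"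
    unfolding sample_obs_rank_def using sp g_def by simp
  also have "\<dots> = card (g ` R)" using dim_span_eq_card_independent[OF indR] .
  also have "\<dots> = card R" using inj_on_subset[OF injg Rsub] card_image by blast
  finally show ?thesis unfolding R_def n_def .
qed



lemma mod_cancel_aux:
  fixes t d i n :: nat
  assumes "(t + d) mod n = (t + i) mod n" "i < n"
  shows "d mod n = i"
proof -
  have "int (t+d) mod int n = int (t+i) mod int n" using assms(1) by (metis of_nat_mod)
  then have "int n dvd (int t + int d) - (int t + int i)" by (simp add: mod_eq_dvd_iff)
  then have "int n dvd int d - int i" by simp
  then have "int d mod int n = int i mod int n" by (simp add: mod_eq_dvd_iff)
  then have "d mod n = i mod n" by (metis of_nat_mod of_nat_eq_iff)
  then show ?thesis using assms(2) by simp
qed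

lemma mod_hit:
  fixes t k n :: nat
  assumes "k < n"
  shows "(t + (k + n - t mod n) mod n) mod n = k"
  using assms by (metis (no_types, lifting) add_diff_inverse_nat less_numeral_extra(3)
    mod_add_left_eq mod_add_right_eq mod_add_self2 mod_if mod_less_divisor
    nat_diff_split_asm trans_less_add2 zero_less_diff)


lemma comb:
  fixes S :: "nat set" and n :: nat
  assumes "n \<ge> 1" "finite S"
  shows "card ((\<lambda>s. s mod n) ` S) = n \<longleftrightarrow>
    (\<exists>(t::nat) (r::nat \<Rightarrow> nat). insert t ((\<lambda>i. t + r i * n + i) ` {1..<n}) \<subseteq> S)"
proof -
  define R where "R = (\<lambda>s. s mod n) ` S"
  have Rsub: "R \<subseteq> {0..<n}" unfolding R_def using assms(1) by auto
  have "card R = n \<longleftrightarrow> R = {0..<n}"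
    using card_subset_eq[OF _ Rsub] by auto
  also have "\<dots> \<longleftrightarrow> (\<exists>(t::nat) (r::nat \<Rightarrow> nat). insert t ((\<lambda>i. t + r i * n + i) ` {1..<n}) \<subseteq> S)"
  proof
    assume RR: "R = {0..<n}"
    then have "0 \<in> R" using assms(1) by auto
    then have Sne: "S \<noteq> {}" unfolding R_def by auto
    define t where "t = Min S"
    have tS: "t \<in> S" using Sne assms(2) t_def by simp
    have tle: "t \<le> s" if "s \<in> S" for s using that assms(2) t_def by simp
    define sf where "sf i = (SOME s. s \<in> S \<and> s mod n = (t + i) mod n)" for i
    have sf: "sf i \<in> S \<and> sf i mod n = (t + i) mod n" for i
    proof -
      have "(t + i) mod n \<in> R" using RR assms(1) by auto
      then obtain s where "s \<in> S" "s mod n = (t + i) mod n" unfolding R_def by auto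
      then show ?thesis unfolding sf_def by (metis (mono_tags, lifting) someI_ex)
    qed
    define r where "r i = (sf i - t) div n" for i
    have eqs: "t + r i * n + i = sf i" if "i \<in> {1..<n}" for i
    proof -
      define d where "d = sf i - t"
      have sd: "sf i = t + d" using tle sf d_def by (metis le_add_diff_inverse)
      have "d mod n = i" using mod_cancel_aux[of t d n i] sf[of i] sd that by auto
      then show ?thesis using sd r_def d_def by (metis add.assoc div_mult_mod_eq)
    qed
    have "insert t ((\<lambda>i. t + r i * n + i) ` {1..<n}) \<subseteq> S"
    proof (rule insert_subsetI[OF tS], rule image_subsetI)
      fix i assume "i \<in> {1..<n}"
      then show "t + r i * n + i \<in> S" using eqs[of i] sf[of i] by simp
    qed
    then show "\<exists>(t::nat) (r::nat \<Rightarrow> nat). insert t ((\<lambda>i. t + r i * n + i) ` {1..<n}) \<subseteq> S" by blast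
  next
    assume "\<exists>(t::nat) (r::nat \<Rightarrow> nat). insert t ((\<lambda>i. t + r i * n + i) ` {1..<n}) \<subseteq> S"
    then obtain t r where tr: "insert t ((\<lambda>i. t + r i * n + i) ` {1..<n}) \<subseteq> S" by blast
    define h where "h i = (if i = 0 then t else t + r i * n + i)" for i
    have h: "h i \<in> S \<and> h i mod n = (t + i) mod n" if "i < n" for i
    proof (cases "i = 0")
      case True then show ?thesis using tr h_def by auto
    next
      case False
      then have "i \<in> {1..<n}" using that by simp
      then have mem: "t + r i * n + i \<in> (\<lambda>i. t + r i * n + i) ` {1..<n}" by (rule imageI)
      have hi: "h i = t + r i * n + i" using False h_def by simp
      have sub: "(\<lambda>i. t + r i * n + i) ` {1..<n} \<subseteq> S" using tr by (simp only: insert_subset)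
      have m: "t + r i * n + i \<in> S" using sub mem by (rule subsetD)
      have "h i \<in> S" unfolding hi by (rule m)
      moreover have "h i mod n = (t + i) mod n" unfolding hi
      proof -
        have "t + r i * n + i = (t + i) + r i * n" by simp
        then show "(t + r i * n + i) mod n = (t + i) mod n" by (simp only: mod_mult_self1)
      qed
      ultimately show ?thesis by blast
    qed
    have "{0..<n} \<subseteq> R"
    proof
      fix k assume "k \<in> {0..<n}"
      then have k: "k < n" by simp
      define i where "i = (k + n - t mod n) mod n"
      have "i < n" using i_def assms(1) by simp
      then have "h i \<in> S" "h i mod n = k" using h mod_hit[OF k, of t] i_def by auto
      then show "k \<in> R" unfolding R_def by (metis imageI)
    qed
    then show "R = {0..<n}" using Rsub by auto
  qed
  finally show ?thesis unfolding R_def .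
qed

theorem lemma4:
  fixes A :: "real^'n::finite^'n" and C :: "real^'n" and S :: "nat set"
  assumes "CARD('n) \<ge> 2"
    and "observable A C"
    and "0 \<notin> eigenvalues A"
    and "card (eigenvalues A) = CARD('n)"
    and "\<forall>l\<in>eigenvalues A. \<forall>m\<in>eigenvalues A. l ^ CARD('n) = m ^ CARD('n)"
    and "finite S"
  shows "sample_obs_rank A C S = CARD('n) \<longleftrightarrow>
    (\<exists>(t::nat) (r::nat \<Rightarrow> nat).
       insert t ((\<lambda>i. t + r i * CARD('n) + i) ` {1..<CARD('n)}) \<subseteq> S)"
proof -
  obtain cr where cr: "cr \<noteq> 0" "matpow A CARD('n) = cr *\<^sub>R mat 1"
    using pow_scalar[OF assms(3,4,5)] by blast
  have "sample_obs_rank A C S = card ((\<lambda>s. s mod CARD('n)) ` S)"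
    using rank_card[OF assms(2) cr(2) cr(1) assms(6)] .
  then show ?thesis using comb[of "CARD('n)" S] assms(1,6) by simp
qed

end
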